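(* Let $(A,P)$ be a $TD$-algebra and let $A_P$ be the vector space $A$ equipped with the (associative) product $a*_P b:=P(a)b+aP(b)-a\,P(1_A)\,b$. Then $P$ is a Nijenhuis operator for $*_P$, i.e. $P(a)*_P P(b)=P\bigl(P(a)*_P b+a*_P P(b)\bigr)-P^2(a*_P b)$ for all $a,b\in A$.
   Context: $\mathbb{K}$ is a field of characteristic $0$; algebras are associative unital $\mathbb{K}$-algebras (not necessarily commutative). A $TD$-algebra is a pair $(A,P)$ with $P:A\to A$ a $\mathbb{K}$-linear map satisfying the $TD$-relation $P(x)P(y)=P\bigl(P(x)y+xP(y)\bigr)-P\bigl(x\,P(1_A)\,y\bigr)$ for all $x,y\in A$. *)

theory Defs
  imports Main "HOL.Vector_Spaces"
begin

definition K_algebra :: "('k::field \<Rightarrow> 'a::ring_1 \<Rightarrow> 'a) \<Rightarrow> bool" where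
  "K_algebra scale \<longleftrightarrow> Vector_Spaces.vector_space scale \<and>
     (\<forall>c x y. scale c (x * y) = scale c x * y \<and> scale c (x * y) = x * scale c y)"

definition TD_operator :: "('k::field \<Rightarrow> 'a::ring_1 \<Rightarrow> 'a) \<Rightarrow> ('a \<Rightarrow> 'a) \<Rightarrow> bool" where
  "TD_operator scale P \<longleftrightarrow> Vector_Spaces.linear scale scale P \<and>
     (\<forall>x y. P x * P y = P (P x * y + x * P y) - P (x * P 1 * y))"

definition prodP :: "('a::ring_1 \<Rightarrow> 'a) \<Rightarrow> 'a \<Rightarrow> 'a \<Rightarrow> 'a" where
  "prodP P a b = P a * b + a * P b - a * P 1 * b"

definition Nijenhuis :: "('a::ab_group_add \<Rightarrow> 'a \<Rightarrow> 'a) \<Rightarrow> ('a \<Rightarrow> 'a) \<Rightarrow> bool" where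
  "Nijenhuis m P \<longleftrightarrow> (\<forall>a b. m (P a) (P b) = P (m (P a) b + m a (P b)) - P (P (m a b)))"

end

theory Submission
  imports Defs
begin

lemma grp: "(A::'a::ab_group_add) + B - C + (B + D - E) = A + B + (B + D) - C - E"
  by (simp add: algebra_simps)

lemma grp2: "(X::'a::ab_group_add) = Y + Z - W \<Longrightarrow> U = V + Q - Y - Z2 \<Longrightarrow> True"
  by simp

theorem proposition3p5:
  fixes scale :: "'k::field_char_0 \<Rightarrow> 'a::ring_1 \<Rightarrow> 'a" and P :: "'a \<Rightarrow> 'a"
  assumes "K_algebra scale" and "TD_operator scale P"
  shows "Nijenhuis (prodP P) P"
proof -
  have lin: "Vector_Spaces.linear scale scale P"
   and td: "\<And>x y. P x * P y = P (P x * y + x * P y) - P (x * P 1 * y)"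
    using assms(2) unfolding TD_operator_def by auto
  have mh: "module_hom scale scale P" using lin by (simp add: linear_iff_module_hom)
  have add: "\<And>x y. P (x + y) = P x + P y" using module_hom.add[OF mh] .
  have dif: "\<And>x y. P (x - y) = P x - P y" using module_hom.diff[OF mh] .
  define w where "w = P 1"
  have L: "\<And>y. P (P y) = w * P y"
    using td[of 1] by (simp add: w_def add)
  have R: "\<And>x. P (P x) = P x * w"
    using td[of _ 1] by (simp add: w_def add)
  have hom: "P (prodP P a b) = P a * P b" for a b
    unfolding prodP_def dif using td[of a b] by simp
  show ?thesis unfolding Nijenhuis_def
  proof (intro allI)
    fix a b
    have t1: "P (P a) * P b = P (P (P a) * b + P a * P b) - P (P a * w * b)"
      using td[of "P a" b] by (simp add: w_def)
    have t2: "P a * P (P b) = P (P a * P b + a * P (P b)) - P (a * w * P b)"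
      using td[of a "P b"] by (simp add: w_def)
    have e: "P (prodP P (P a) b + prodP P a (P b))
        = P (P (P a) * b + P a * P b) + P (P a * P b + a * P (P b)) - P (P a * w * b) - P (a * w * P b)"
    proof -
      have "prodP P (P a) b + prodP P a (P b) = ((P (P a) * b + P a * P b) - P a * w * b) + ((P a * P b + a * P (P b)) - a * w * P b)"
        unfolding prodP_def w_def by (simp add: algebra_simps)
      then show ?thesis by (simp only: add dif grp)
    qed
    have e2: "P (P (prodP P a b)) = P a * w * P b"
    proof -
      have "P (P (prodP P a b)) = w * (P a * P b)" by (simp only: L[of "prodP P a b"], simp only: hom)
      also have "\<dots> = (w * P a) * P b" by (simp only: mult.assoc)
      also have "\<dots> = P a * w * P b" by (simp only: L[symmetric] R)
      finally show ?thesis .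
    qed
    have "prodP P (P a) (P b) = P (P a) * P b + P a * P (P b) - P a * w * P b"
      by (simp add: prodP_def w_def)
    also have "\<dots> = P (prodP P (P a) b + prodP P a (P b)) - P (P (prodP P a b))"
      using t1 t2 e e2 by simp
    finally show "prodP P (P a) (P b) = P (prodP P (P a) b + prodP P a (P b)) - P (P (prodP P a b))" .
  qed
qed

end
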